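(* Let $n\in\mathbb{N}$, let $p$ be a prime and let $d,k,m\in\mathbb{N}$. Consider the system of equations \[ F_1(x_1,\ldots,x_m)=\cdots=F_k(x_1,\ldots,x_m)=0, \] where each $F_i$ is a homogeneous polynomial of degree $d$ with coefficients in $\mathbb{Z}/p^n\mathbb{Z}$. For every non-negative integer $h$ (and every $n'$), let $S(n',h)$ denote the set of solutions $(x_1,\ldots,x_m)\in(\mathbb{Z}/p^{n'}\mathbb{Z})^m$ of the system (with coefficients reduced modulo $p^{n'}$) satisfying $\min\{\nu_p(x_1),\ldots,\nu_p(x_m)\}=h$. If $0\le h<n/d$, then \[ |S(n,h)| = p^{(d-1)hm}\,|S(n-dh,0)|. \]
   Context: For a prime $p$ and $n\in\mathbb{N}$, the $p$-adic valuation $\nu_p:\mathbb{Z}/p^n\mathbb{Z}\to\{0,1,\ldots,n\}$ is defined by $\nu_p(y+p^n\mathbb{Z})=\nu_p(y)$ (the largest $j\ge 0$ with $p^j\mid y$) if $p^n\nmid y$, and $\nu_p(y+p^n\mathbb{Z})=n$ if $p^n\mid y$. *)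

theory Defs
  imports Complex_Main "HOL-Computational_Algebra.Primes"
begin

definition hmonos :: "nat \<Rightarrow> nat \<Rightarrow> (nat \<Rightarrow> nat) set" where
  "hmonos m d = {e. (\<forall>j\<ge>m. e j = 0) \<and> (\<Sum>j<m. e j) = d}"

(* A homogeneous polynomial of degree d in m variables is given by its coefficient
  function c on exponent vectors (integer representatives of residues); evaluation: *)
definition hpoly_eval :: "nat \<Rightarrow> nat \<Rightarrow> ((nat \<Rightarrow> nat) \<Rightarrow> int) \<Rightarrow> (nat \<Rightarrow> int) \<Rightarrow> int" where
  "hpoly_eval m d c x = (\<Sum>e\<in>hmonos m d. c e * (\<Prod>j<m. x j ^ e j))"

(* p-adic valuation on Z/p^n Z, evaluated on an integer representative. *)
definition padic_val_mod :: "nat \<Rightarrow> nat \<Rightarrow> int \<Rightarrow> nat" where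
  "padic_val_mod p n y = (if int p ^ n dvd y then n else multiplicity (int p) y)"

(* S(n',h): solutions in (Z/p^n' Z)^m (represented by x_j in {0..<p^n'}) of the system
  F_1 = ... = F_k = 0 reduced mod p^n', with minimal valuation h. *)
definition sol_set :: "nat \<Rightarrow> nat \<Rightarrow> nat \<Rightarrow> nat \<Rightarrow> (nat \<Rightarrow> (nat \<Rightarrow> nat) \<Rightarrow> int) \<Rightarrow> nat \<Rightarrow> nat
    \<Rightarrow> (nat \<Rightarrow> int) set" where
  "sol_set p m d k F n' h = {x.
     (\<forall>j<m. x j \<in> {0..<int p ^ n'}) \<and> (\<forall>j\<ge>m. x j = 0) \<and>
     (\<forall>i<k. int p ^ n' dvd hpoly_eval m d (F i) x) \<and>
     Min ((\<lambda>j. padic_val_mod p n' (x j)) ` {..<m}) = h}"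

end

theory Submission
  imports Defs "HOL-Number_Theory.Cong" "HOL-Library.FuncSet"
begin

lemma hpoly_hom:
  "hpoly_eval m d c (\<lambda>j. a * x j) = a ^ d * hpoly_eval m d c x"
proof -
  have "c e * (\<Prod>j<m. (a * x j) ^ e j) = a ^ d * (c e * (\<Prod>j<m. x j ^ e j))"
    if "e \<in> hmonos m d" for e
  proof -
    have "(\<Prod>j<m. (a * x j) ^ e j) = (\<Prod>j<m. a ^ e j) * (\<Prod>j<m. x j ^ e j)"
      by (simp add: power_mult_distrib prod.distrib)
    also have "(\<Prod>j<m. a ^ e j) = a ^ d"
      using that by (simp add: hmonos_def power_sum[symmetric])
    finally show ?thesis by simp
  qed
  then show ?thesis unfolding hpoly_eval_def sum_distrib_left
    by (intro sum.cong) auto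
qed

lemma hpoly_scale:
  "hpoly_eval m d c (\<lambda>j. a ^ h * x j) = a ^ (d * h) * hpoly_eval m d c x"
proof -
  have "(a ^ h) ^ d = a ^ (d * h)" by (simp add: power_mult[symmetric] mult.commute)
  then show ?thesis by (simp add: hpoly_hom)
qed

lemma hpoly_cong:
  assumes "\<And>j. j < m \<Longrightarrow> [x j = y j] (mod M)"
  shows "[hpoly_eval m d c x = hpoly_eval m d c y] (mod M)"
  unfolding hpoly_eval_def
  by (intro cong_sum cong_mult cong_refl cong_prod cong_pow assms) auto

lemma val_ge:
  assumes "prime p" "0 \<le> y" "y < int p ^ n" "h \<le> n"
  shows "(h \<le> padic_val_mod p n y) \<longleftrightarrow> int p ^ h dvd y"
proof (cases "y = 0")
  case True
  then show ?thesis using assms by (simp add: padic_val_mod_def)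
next
  case False
  then have y: "0 < y" using assms by simp
  have "\<not> int p ^ n dvd y"
    using y assms(3) zdvd_imp_le by fastforce
  moreover have "\<not> is_unit (int p)" using assms(1)
    using prime_int_iff by auto
  ultimately show ?thesis using False
    by (simp add: padic_val_mod_def power_dvd_iff_le_multiplicity)
qed

lemma min_val:
  fixes x :: "nat \<Rightarrow> int" and m :: nat
  assumes "prime p" "m \<ge> 1" "h < n" "\<And>j. j < m \<Longrightarrow> x j \<in> {0..<int p ^ n}"
  shows "Min ((\<lambda>j. padic_val_mod p n (x j)) ` {..<m}) = h \<longleftrightarrow>
    (\<forall>j<m. int p ^ h dvd x j) \<and> (\<exists>j<m. \<not> int p ^ Suc h dvd x j)"
proof -
  let ?S = "(\<lambda>j. padic_val_mod p n (x j)) ` {..<m}"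
  have fin: "finite ?S" by simp
  have ne: "?S \<noteq> {}" using assms(2) by (auto simp: lessThan_empty_iff)
  have g1: "\<And>j. j < m \<Longrightarrow> (h \<le> padic_val_mod p n (x j)) \<longleftrightarrow> int p ^ h dvd x j"
    using val_ge[OF assms(1)] assms(3,4) by simp
  have g2: "\<And>j. j < m \<Longrightarrow> (Suc h \<le> padic_val_mod p n (x j)) \<longleftrightarrow> int p ^ Suc h dvd x j"
    using val_ge[OF assms(1)] assms(3,4) by simp
  have "Min ?S = h \<longleftrightarrow> (\<forall>j<m. h \<le> padic_val_mod p n (x j)) \<and> (\<exists>j<m. \<not> Suc h \<le> padic_val_mod p n (x j))"
  proof
    assume "Min ?S = h"
    then show "(\<forall>j<m. h \<le> padic_val_mod p n (x j)) \<and> (\<exists>j<m. \<not> Suc h \<le> padic_val_mod p n (x j))"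
      using Min_in[OF fin ne] Min_le[OF fin] by force
  next
    assume A: "(\<forall>j<m. h \<le> padic_val_mod p n (x j)) \<and> (\<exists>j<m. \<not> Suc h \<le> padic_val_mod p n (x j))"
    then have "h \<le> Min ?S" using fin ne by (subst Min_ge_iff) auto
    moreover have "Min ?S \<le> h" using A Min_le[OF fin] by (meson lessThan_iff image_eqI not_less_eq_eq order_trans)
    ultimately show "Min ?S = h" by simp
  qed
  then show ?thesis using g1 g2 by auto
qed


theorem lemma5p1:
  fixes n p d k m h :: nat and F :: "nat \<Rightarrow> (nat \<Rightarrow> nat) \<Rightarrow> int"
  assumes "prime p" and "m \<ge> 1" and "real h < real n / real d"
  shows "card (sol_set p m d k F n h) = p ^ ((d - 1) * h * m) * card (sol_set p m d k F (n - d * h) 0)"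
proof -
  have d1: "d \<ge> 1"
  proof (rule ccontr)
    assume "\<not> d \<ge> 1" then have "d = 0" by simp
    then show False using assms(3) by simp
  qed
  have "real h * real d < real n" using assms(3) d1 by (simp add: pos_less_divide_eq)
  then have dh: "d * h < n" by (metis of_nat_less_iff of_nat_mult mult.commute)
  define P where "P = int p"
  define N where "N = n - d * h"
  define Q where "Q = p ^ ((d - 1) * h)"
  have P1: "P > 1" using assms(1) prime_gt_1_nat unfolding P_def by auto
  have P0: "P > 0" using P1 by simp
  have N1: "N \<ge> 1" using dh unfolding N_def by simp
  have hn: "h < n"
  proof -
    have "h \<le> d * h" using d1 by simp
    then show ?thesis using dh by linarith
  qed
  have nsplit: "n = h + (d - 1) * h + N"
  proof -
    have "d = Suc (d - 1)" using d1 by simp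
    then have "d * h = h + (d - 1) * h" by (metis mult_Suc)
    then show ?thesis using dh unfolding N_def by simp
  qed
  have nsplit2: "n = d * h + N" using dh unfolding N_def by simp
  have Pn: "P ^ n = P ^ h * (P ^ N * int Q)"
    unfolding Q_def P_def by (subst nsplit) (simp add: power_add)
  have Pn2: "P ^ n = P ^ (d * h) * P ^ N"
    by (subst nsplit2) (simp add: power_add)
  have PdN: "P dvd P ^ N" using N1 by (simp add: dvd_power)
  define A where "A = sol_set p m d k F n h"
  define B where "B = sol_set p m d k F N 0"
  define T where "T = PiE {..<m} (\<lambda>_. {0..<int Q})"
  define \<psi> where "\<psi> = (\<lambda>(y::nat\<Rightarrow>int, t::nat\<Rightarrow>int). (\<lambda>j. P ^ h * (if j < m then y j + P ^ N * t j else 0)))"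
  define \<phi> where "\<phi> = (\<lambda>x::nat\<Rightarrow>int. (\<lambda>j. (x j div P ^ h) mod P ^ N, restrict (\<lambda>j. (x j div P ^ h) div P ^ N) {..<m}))"
  have minA: "\<And>x. (\<And>j. j < m \<Longrightarrow> x j \<in> {0..<P ^ n}) \<Longrightarrow>
     Min ((\<lambda>j. padic_val_mod p n (x j)) ` {..<m}) = h \<longleftrightarrow>
    (\<forall>j<m. P ^ h dvd x j) \<and> (\<exists>j<m. \<not> P ^ Suc h dvd x j)"
    unfolding P_def by (rule min_val[OF assms(1,2) hn]) (simp add: P_def)
  have minB: "\<And>x. (\<And>j. j < m \<Longrightarrow> x j \<in> {0..<P ^ N}) \<Longrightarrow>
     Min ((\<lambda>j. padic_val_mod p N (x j)) ` {..<m}) = 0 \<longleftrightarrow>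
    (\<exists>j<m. \<not> P dvd x j)"
    using min_val[OF assms(1,2), of 0 N] N1 unfolding P_def by simp
  have bij: "bij_betw \<psi> (B \<times> T) A"
  proof (rule bij_betw_byWitness[where f'=\<phi>])
    show "\<forall>a\<in>B \<times> T. \<phi> (\<psi> a) = a"
    proof
      fix a assume a: "a \<in> B \<times> T"
      obtain y t where yt: "a = (y, t)" by (cases a)
      have yB: "y \<in> B" and tT: "t \<in> T" using a yt by auto
      have y1: "\<And>j. j < m \<Longrightarrow> 0 \<le> y j \<and> y j < P ^ N" and y2: "\<And>j. j \<ge> m \<Longrightarrow> y j = 0"
        using yB unfolding B_def sol_set_def P_def by auto
      have t2: "\<And>j. j \<ge> m \<Longrightarrow> t j = undefined" using tT unfolding T_def by (auto simp: PiE_def extensional_def)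
      have "(\<lambda>j. (\<psi> (y, t) j div P ^ h) mod P ^ N) = y"
      proof
        fix j show "(\<psi> (y, t) j div P ^ h) mod P ^ N = y j"
          using y1[of j] y2[of j] P0 unfolding \<psi>_def by auto
      qed
      moreover have "restrict (\<lambda>j. (\<psi> (y, t) j div P ^ h) div P ^ N) {..<m} = t"
      proof
        fix j show "restrict (\<lambda>j. (\<psi> (y, t) j div P ^ h) div P ^ N) {..<m} j = t j"
          using y1[of j] t2[of j] P0 unfolding \<psi>_def by auto
      qed
      ultimately show "\<phi> (\<psi> a) = a" unfolding \<phi>_def yt by simp
    qed
    show "\<forall>x\<in>A. \<psi> (\<phi> x) = x"
    proof
      fix x assume xA: "x \<in> A"
      have x1: "\<And>j. j < m \<Longrightarrow> x j \<in> {0..<P ^ n}" and x2: "\<And>j. j \<ge> m \<Longrightarrow> x j = 0"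
        and xmin: "Min ((\<lambda>j. padic_val_mod p n (x j)) ` {..<m}) = h"
        using xA unfolding A_def sol_set_def P_def by auto
      have xd: "\<And>j. j < m \<Longrightarrow> P ^ h dvd x j" using minA[OF x1] xmin by auto
      show "\<psi> (\<phi> x) = x"
      proof
        fix j
        show "\<psi> (\<phi> x) j = x j"
        proof (cases "j < m")
          case True
          have "x j div P ^ h mod P ^ N + P ^ N * (x j div P ^ h div P ^ N) = x j div P ^ h"
            by simp
          then show ?thesis using True xd[OF True] unfolding \<psi>_def \<phi>_def by simp
        next
          case False then show ?thesis using x2[of j] unfolding \<psi>_def \<phi>_def by simp
        qed
      qed
    qed
    show "\<psi> ` (B \<times> T) \<subseteq> A"
    proof
      fix x assume "x \<in> \<psi> ` (B \<times> T)"
      then obtain y t where yB: "y \<in> B" and tT: "t \<in> T" and xe: "x = \<psi> (y, t)" by auto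
      have y1: "\<And>j. j < m \<Longrightarrow> 0 \<le> y j \<and> y j < P ^ N" and y2: "\<And>j. j \<ge> m \<Longrightarrow> y j = 0"
        and yeq: "\<And>i. i < k \<Longrightarrow> P ^ N dvd hpoly_eval m d (F i) y"
        and ymin: "Min ((\<lambda>j. padic_val_mod p N (y j)) ` {..<m}) = 0"
        using yB unfolding B_def sol_set_def P_def by auto
      have t1: "0 \<le> t j \<and> t j < int Q" if "j < m" for j
      proof -
        have "t j \<in> {0..<int Q}" using tT that unfolding T_def by (simp add: PiE_iff)
        then show ?thesis by simp
      qed
      define w where "w = (\<lambda>j. if j < m then y j + P ^ N * t j else 0)"
      have xw: "x = (\<lambda>j. P ^ h * w j)" unfolding xe \<psi>_def w_def by simp
      have wr: "0 \<le> w j \<and> w j < P ^ N * int Q" if "j < m" for j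
      proof -
        have "y j + P ^ N * t j < P ^ N * (t j + 1)" using y1[OF that] by (simp add: algebra_simps)
        also have "\<dots> \<le> P ^ N * int Q" using t1[OF that] P0 by (intro mult_left_mono) auto
        finally show ?thesis using y1[OF that] t1[OF that] P0 that unfolding w_def by simp
      qed
      have xr: "x j \<in> {0..<P ^ n}" if "j < m" for j
      proof -
        have "P ^ h * w j < P ^ h * (P ^ N * int Q)" using wr[OF that] P0 by simp
        then show ?thesis using wr[OF that] P0 Pn xw by simp
      qed
      have f2: "x j = 0" if "j \<ge> m" for j using that unfolding xw w_def by simp
      have f3: "P ^ n dvd hpoly_eval m d (F i) x" if "i < k" for i
      proof -
        have "[hpoly_eval m d (F i) w = hpoly_eval m d (F i) y] (mod P ^ N)"
          by (rule hpoly_cong) (auto simp: w_def cong_def)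
        then have "P ^ N dvd hpoly_eval m d (F i) w" using yeq[OF that] cong_dvd_iff by blast
        then have "P ^ (d * h) * P ^ N dvd P ^ (d * h) * hpoly_eval m d (F i) w" by simp
        moreover have "hpoly_eval m d (F i) x = P ^ (d * h) * hpoly_eval m d (F i) w"
          unfolding xw by (rule hpoly_scale)
        ultimately show ?thesis using Pn2 by simp
      qed
      have f4: "Min ((\<lambda>j. padic_val_mod p n (x j)) ` {..<m}) = h"
      proof -
        obtain j where j: "j < m" "\<not> P dvd y j" using minB[of y] y1 ymin by auto
        have "\<not> P ^ Suc h dvd x j"
        proof
          assume "P ^ Suc h dvd x j"
          then have "P ^ h * P dvd P ^ h * w j" unfolding xw by (simp add: mult.commute)
          then have "P dvd w j" using P0 by simp
          then have "P dvd y j + P ^ N * t j" using j unfolding w_def by simp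
          moreover have "P dvd P ^ N * t j" using PdN by simp
          ultimately have "P dvd y j" using dvd_add_left_iff by blast
          then show False using j by simp
        qed
        moreover have "\<forall>j<m. P ^ h dvd x j" unfolding xw by simp
        moreover have "Min ((\<lambda>j. padic_val_mod p n (x j)) ` {..<m}) = h \<longleftrightarrow>
          (\<forall>j<m. P ^ h dvd x j) \<and> (\<exists>j<m. \<not> P ^ Suc h dvd x j)" by (rule minA[OF xr])
        ultimately show ?thesis using j(1) by blast
      qed
      show "x \<in> A" unfolding A_def sol_set_def mem_Collect_eq P_def[symmetric]
        using xr f2 f3 f4 by blast
    qed
    show "\<phi> ` A \<subseteq> B \<times> T"
    proof
      fix a assume "a \<in> \<phi> ` A"
      then obtain x where xA: "x \<in> A" and ae: "a = \<phi> x" by auto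
      have x1: "\<And>j. j < m \<Longrightarrow> x j \<in> {0..<P ^ n}" and x2: "\<And>j. j \<ge> m \<Longrightarrow> x j = 0"
        and xeq: "\<And>i. i < k \<Longrightarrow> P ^ n dvd hpoly_eval m d (F i) x"
        and xmin: "Min ((\<lambda>j. padic_val_mod p n (x j)) ` {..<m}) = h"
        using xA unfolding A_def sol_set_def P_def by auto
      have xd: "\<And>j. j < m \<Longrightarrow> P ^ h dvd x j" using minA[OF x1] xmin by auto
      define z where "z = (\<lambda>j. x j div P ^ h)"
      have xz: "x = (\<lambda>j. P ^ h * z j)"
      proof
        fix j show "x j = P ^ h * z j"
          using xd[of j] x2[of j] unfolding z_def by (cases "j < m") auto
      qed
      have zr: "0 \<le> z j \<and> z j < P ^ N * int Q" if "j < m" for j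
      proof -
        have "P ^ h * z j < P ^ h * (P ^ N * int Q)" using x1[OF that] Pn xz by (metis atLeastLessThan_iff)
        then have zl: "z j < P ^ N * int Q" using P0 by simp
        have "0 \<le> P ^ h * z j" using x1[OF that] xz by (metis atLeastLessThan_iff)
        moreover have "P ^ h > 0" using P0 by simp
        ultimately have "0 \<le> z j" by (simp add: zero_le_mult_iff)
        then show ?thesis using zl by simp
      qed
      define y where "y = (\<lambda>j. z j mod P ^ N)"
      define t where "t = restrict (\<lambda>j. z j div P ^ N) {..<m}"
      have ae': "a = (y, t)" unfolding ae \<phi>_def y_def t_def z_def by simp
      have "t \<in> T"
      proof -
        have "z j div P ^ N < int Q" if "j < m" for j
        proof -
          have "P ^ N * (z j div P ^ N) \<le> z j"
          proof -
            have "0 \<le> z j mod P ^ N" using P0 by simp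
            moreover have "P ^ N * (z j div P ^ N) + z j mod P ^ N = z j" by (rule mult_div_mod_eq)
            ultimately show ?thesis by linarith
          qed
          then have "P ^ N * (z j div P ^ N) < P ^ N * int Q" using zr[OF that] by simp
          then show ?thesis using P0 by (simp add: mult_less_cancel_left)
        qed
        moreover have "0 \<le> z j div P ^ N" if "j < m" for j
          using zr[OF that] P0 by (simp add: pos_imp_zdiv_nonneg_iff)
        ultimately show ?thesis unfolding T_def t_def PiE_iff by simp
      qed
      moreover have "y \<in> B"
      proof -
        have yr: "y j \<in> {0..<P ^ N}" for j unfolding y_def using P0 by simp
        have "y j = 0" if "j \<ge> m" for j using x2[OF that] unfolding y_def z_def by simp
        moreover have "P ^ N dvd hpoly_eval m d (F i) y" if "i < k" for i
        proof -
          have "hpoly_eval m d (F i) x = P ^ (d * h) * hpoly_eval m d (F i) z"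
            unfolding xz by (rule hpoly_scale)
          then have "P ^ (d * h) * P ^ N dvd P ^ (d * h) * hpoly_eval m d (F i) z"
            using xeq[OF that] Pn2 by simp
          then have "P ^ N dvd hpoly_eval m d (F i) z" using P0 by simp
          moreover have "[hpoly_eval m d (F i) y = hpoly_eval m d (F i) z] (mod P ^ N)"
            by (rule hpoly_cong) (auto simp: y_def cong_def)
          ultimately show ?thesis using cong_dvd_iff by blast
        qed
        moreover have "Min ((\<lambda>j. padic_val_mod p N (y j)) ` {..<m}) = 0"
        proof -
          obtain j where j: "j < m" "\<not> P ^ Suc h dvd x j" using minA[OF x1] xmin by auto
          have "\<not> P dvd y j"
          proof
            assume "P dvd y j"
            moreover have "P dvd P ^ N * (z j div P ^ N)" using PdN by simp
            ultimately have "P dvd z j" using div_mult_mod_eq[of "z j" "P ^ N"] unfolding y_def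
              by (metis dvd_add mult.commute)
            then have "P ^ h * P dvd P ^ h * z j" by simp
            then show False using j xz by (metis power_Suc2)
          qed
          then show ?thesis using minB[of y] yr j by blast
        qed
        ultimately show ?thesis using yr unfolding B_def sol_set_def P_def by auto
      qed
      ultimately show "a \<in> B \<times> T" using ae' by simp
    qed
  qed
  have "card A = card (B \<times> T)" using bij_betw_same_card[OF bij] by simp
  also have "\<dots> = card B * card T" by (rule card_cartesian_product)
  also have "card T = Q ^ m" unfolding T_def by (simp add: card_PiE)
  also have "Q ^ m = p ^ ((d - 1) * h * m)" unfolding Q_def by (simp add: power_mult)
  finally show ?thesis unfolding A_def B_def N_def by simp
qed

end
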